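(* For any formulas $A$ and $B$, each of the following rules (with $\Gamma,\Delta$ arbitrary finite multisets of formulas) is strongly admissible in $\mathsf{Grz}_\infty+\mathsf{cut}$: $\mathsf{li}_{A\to B}$: from $\Gamma,A\to B\Rightarrow\Delta$ infer $\Gamma,B\Rightarrow\Delta$; $\mathsf{ri}_{A\to B}$: from $\Gamma,A\to B\Rightarrow\Delta$ infer $\Gamma\Rightarrow A,\Delta$; $\mathsf{i}_{A\to B}$: from $\Gamma\Rightarrow A\to B,\Delta$ infer $\Gamma,A\Rightarrow B,\Delta$; $\mathsf{i}_\bot$: from $\Gamma\Rightarrow\bot,\Delta$ infer $\Gamma\Rightarrow\Delta$; $\mathsf{li}_{\Box A}$: from $\Gamma\Rightarrow\Box A,\Delta$ infer $\Gamma\Rightarrow A,\Delta$.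
   Context: Formulas are built from $\bot$ and atoms by $\to$ and $\Box$; sequents $\Gamma\Rightarrow\Delta$ have finite multisets of formulas on each side; $\Box\Pi$ denotes $\{\Box B:B\in\Pi\}$. The calculus $\mathsf{Grz}_\infty+\mathsf{cut}$ has initial sequents $\Gamma,p\Rightarrow p,\Delta$ ($p$ atomic), $\Gamma,\bot\Rightarrow\Delta$, and rules $(\to_L)$ from $\Gamma,B\Rightarrow\Delta$ and $\Gamma\Rightarrow A,\Delta$ infer $\Gamma,A\to B\Rightarrow\Delta$; $(\to_R)$ from $\Gamma,A\Rightarrow B,\Delta$ infer $\Gamma\Rightarrow A\to B,\Delta$; $(\mathsf{refl})$ from $\Gamma,B,\Box B\Rightarrow\Delta$ infer $\Gamma,\Box B\Rightarrow\Delta$; $(\Box)$ from left premise $\Gamma,\Box\Pi\Rightarrow A,\Delta$ and right premise $\Box\Pi\Rightarrow A$ infer $\Gamma,\Box\Pi\Rightarrow\Box A,\Delta$; $(\mathsf{cut})$ from $\Gamma\Rightarrow A,\Delta$ and $\Gamma,A\Rightarrow\Delta$ infer $\Gamma\Rightarrow\Delta$. An $\infty$-proof is a possibly infinite tree of sequents built by these rules with leaves labelled by initial sequents, in which every infinite branch passes through a right premise of $(\Box)$ infinitely often; $\mathcal P$ is the set of all $\infty$-proofs. The $n$-fragment of an $\infty$-proof is the finite tree obtained by cutting every branch at the $n$-th (from the root) right premise of $(\Box)$; the main fragment is the $1$-fragment; the local height $|\pi|$ is the length of the longest branch of the main fragment (an $\infty$-proof consisting only of an initial sequent has height $0$). Write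 $\pi\sim_n\tau$ if the $n$-fragments of $\pi,\tau$ coincide, and $\pi\sim_0\tau$ always. $\mathcal P_n$ is the set of $\infty$-proofs with no application of $(\mathsf{cut})$ in their $n$-fragment, and $\mathcal P_0=\mathcal P$. A single-premise rule is strongly admissible in $\mathsf{Grz}_\infty+\mathsf{cut}$ if there is a mapping $\mathsf u:\mathcal P\to\mathcal P$ such that: (i) $\mathsf u$ is non-expansive: $\pi\sim_n\pi'$ implies $\mathsf u(\pi)\sim_n\mathsf u(\pi')$ for all $n$; (ii) $\mathsf u$ is adequate: $\pi\in\mathcal P_n$ implies $\mathsf u(\pi)\in\mathcal P_n$ for all $n$; (iii) $|\mathsf u(\pi)|\le|\pi|$ for all $\pi\in\mathcal P$; (iv) for every instance of the rule, $\mathsf u$ maps every $\infty$-proof of its premise to an $\infty$-proof of its conclusion. *)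

theory Defs
  imports Main "HOL-Library.Multiset" "HOL-Library.Extended_Nat"
begin

datatype fm = Bot | At nat | Imp fm fm | Box fm

type_synonym sequent = "fm multiset \<times> fm multiset"

text \<open>RBox Pi A denotes the box rule with principal formula Box A and
  boxed context Box Pi; its premise with index 0 is the left premise and index 1 the right one.\<close>
datatype rl = RAx | RBotL | RImpL fm fm | RImpR fm fm | RRefl fm | RBox "fm multiset" fm | RCut fm

codatatype ptree = PNode (pseq: sequent) (prule: rl) (psubs: "ptree list")

fun step :: "sequent \<Rightarrow> rl \<Rightarrow> sequent list \<Rightarrow> bool" where
  "step (L, R) RAx ps = (ps = [] \<and> (\<exists>p. At p \<in># L \<and> At p \<in># R))"
| "step (L, R) RBotL ps = (ps = [] \<and> Bot \<in># L)"
| "step (L, R) (RImpL A B) ps = (Imp A B \<in># L \<and>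
      ps = [(L - {#Imp A B#} + {#B#}, R), (L - {#Imp A B#}, R + {#A#})])"
| "step (L, R) (RImpR A B) ps = (Imp A B \<in># R \<and>
      ps = [(L + {#A#}, R - {#Imp A B#} + {#B#})])"
| "step (L, R) (RRefl B) ps = (Box B \<in># L \<and> ps = [(L + {#B#}, R)])"
| "step (L, R) (RBox Pi A) ps = (image_mset Box Pi \<subseteq># L \<and> Box A \<in># R \<and>
      ps = [(L, R - {#Box A#} + {#A#}), (image_mset Box Pi, {#A#})])"
| "step (L, R) (RCut A) ps = (ps = [(L, R + {#A#}), (L + {#A#}, R)])"

definition rbox :: "ptree \<Rightarrow> nat \<Rightarrow> bool" where
  "rbox t i \<longleftrightarrow> (\<exists>Pi A. prule t = RBox Pi A) \<and> i = 1"

definition is_cut :: "rl \<Rightarrow> bool" where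
  "is_cut r \<longleftrightarrow> (\<exists>A. r = RCut A)"

inductive_set nodes :: "ptree \<Rightarrow> ptree set" for t where
  "t \<in> nodes t"
| "s \<in> nodes t \<Longrightarrow> u \<in> set (psubs s) \<Longrightarrow> u \<in> nodes t"

primrec walk :: "ptree \<Rightarrow> (nat \<Rightarrow> nat) \<Rightarrow> nat \<Rightarrow> ptree" where
  "walk t f 0 = t"
| "walk t f (Suc k) = psubs (walk t f k) ! f k"

definition is_branch :: "ptree \<Rightarrow> (nat \<Rightarrow> nat) \<Rightarrow> bool" where
  "is_branch t f \<longleftrightarrow> (\<forall>k. f k < length (psubs (walk t f k)))"

definition is_proof :: "ptree \<Rightarrow> bool" where
  "is_proof t \<longleftrightarrow>
     (\<forall>s\<in>nodes t. step (pseq s) (prule s) (map pseq (psubs s))) \<and>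
     (\<forall>f. is_branch t f \<longrightarrow> (\<exists>\<^sub>\<infinity>k. rbox (walk t f k) (f k)))"

definition Proofs :: "ptree set" where
  "Proofs = {t. is_proof t}"

text \<open>frag n t s: s is a node of the n-fragment of t at which a rule is applied
  (i.e. reached passing fewer than n right premises of (Box)).\<close>
inductive frag :: "nat \<Rightarrow> ptree \<Rightarrow> ptree \<Rightarrow> bool" where
  "frag (Suc n) t t"
| "i < length (psubs t) \<Longrightarrow> \<not> rbox t i \<Longrightarrow> frag (Suc n) (psubs t ! i) s \<Longrightarrow> frag (Suc n) t s"
| "i < length (psubs t) \<Longrightarrow> rbox t i \<Longrightarrow> frag n (psubs t ! i) s \<Longrightarrow> frag (Suc n) t s"

definition Pn :: "nat \<Rightarrow> ptree set" where
  "Pn n = {t \<in> Proofs. \<forall>s. frag n t s \<longrightarrow> \<not> is_cut (prule s)}"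

text \<open>agree n t u: the n-fragments of t and u coincide (agree 0 always holds).\<close>
coinductive agree :: "nat \<Rightarrow> ptree \<Rightarrow> ptree \<Rightarrow> bool" where
  "agree 0 t u"
| "pseq t = pseq u \<Longrightarrow> prule t = prule u \<Longrightarrow> map pseq (psubs t) = map pseq (psubs u) \<Longrightarrow>
   (\<forall>i < length (psubs t). agree (if rbox t i then n else Suc n) (psubs t ! i) (psubs u ! i)) \<Longrightarrow>
   agree (Suc n) t u"

text \<open>Branches of the main fragment (right premises of (Box) occur as leaves).\<close>
inductive mbranch :: "ptree \<Rightarrow> nat \<Rightarrow> bool" where
  "mbranch t 0"
| "i < length (psubs t) \<Longrightarrow> \<not> rbox t i \<Longrightarrow> mbranch (psubs t ! i) k \<Longrightarrow> mbranch t (Suc k)"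
| "i < length (psubs t) \<Longrightarrow> rbox t i \<Longrightarrow> mbranch t (Suc 0)"

definition local_height :: "ptree \<Rightarrow> enat" where
  "local_height t = Sup {enat k | k. mbranch t k}"

text \<open>A single-premise rule is given as the set of its instances (premise, conclusion).\<close>
definition strongly_admissible :: "(sequent \<times> sequent) set \<Rightarrow> bool" where
  "strongly_admissible R \<longleftrightarrow> (\<exists>u :: ptree \<Rightarrow> ptree.
     (\<forall>t\<in>Proofs. u t \<in> Proofs) \<and>
     (\<forall>n t t'. t \<in> Proofs \<longrightarrow> t' \<in> Proofs \<longrightarrow> agree n t t' \<longrightarrow> agree n (u t) (u t')) \<and>
     (\<forall>n t. t \<in> Pn n \<longrightarrow> u t \<in> Pn n) \<and>
     (\<forall>t\<in>Proofs. local_height (u t) \<le> local_height t) \<and>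
     (\<forall>(prem, concl) \<in> R. \<forall>t\<in>Proofs. pseq t = prem \<longrightarrow> pseq (u t) = concl))"

definition li_imp :: "fm \<Rightarrow> fm \<Rightarrow> (sequent \<times> sequent) set" where
  "li_imp A B = {((G + {#Imp A B#}, D), (G + {#B#}, D)) | G D. True}"

definition ri_imp :: "fm \<Rightarrow> fm \<Rightarrow> (sequent \<times> sequent) set" where
  "ri_imp A B = {((G + {#Imp A B#}, D), (G, {#A#} + D)) | G D. True}"

definition i_imp :: "fm \<Rightarrow> fm \<Rightarrow> (sequent \<times> sequent) set" where
  "i_imp A B = {((G, {#Imp A B#} + D), (G + {#A#}, {#B#} + D)) | G D. True}"

definition i_bot :: "(sequent \<times> sequent) set" where
  "i_bot = {((G, {#Bot#} + D), (G, D)) | G D. True}"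

definition li_box :: "fm \<Rightarrow> (sequent \<times> sequent) set" where
  "li_box A = {((G, {#Box A#} + D), (G, {#A#} + D)) | G D. True}"

end

theory Submission imports Defs "HOL-Library.Infinite_Set" begin
definition rb :: "rl \<Rightarrow> nat \<Rightarrow> bool" where "rb r i \<longleftrightarrow> (\<exists>Pi A. r = RBox Pi A) \<and> i = 1"
primcorec U :: "(sequent \<Rightarrow> sequent) \<Rightarrow> (rl \<Rightarrow> bool) \<Rightarrow> nat \<Rightarrow> ptree \<Rightarrow> ptree" where
 "U tr P j t = PNode (tr (pseq t)) (prule t) (map (\<lambda>(i,c). if rb (prule t) i then c else if P (prule c) \<and> j < length (psubs c) then psubs c ! j else U tr P j c) (zip [0..<length (psubs t)] (psubs t)))"

definition uu where "uu tr P j t = (if P (prule t) \<and> j < length (psubs t) then psubs t ! j else U tr P j t)"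

lemma rbox_rb: "rbox t i = rb (prule t) i" by (simp add: rbox_def rb_def)

declare U.sel[simp del]
lemma U_simps[simp]: "pseq (U tr P j t) = tr (pseq t)" "prule (U tr P j t) = prule t"
  "length (psubs (U tr P j t)) = length (psubs t)"
  "i < length (psubs t) \<Longrightarrow> psubs (U tr P j t) ! i = (if rb (prule t) i then psubs t ! i else uu tr P j (psubs t ! i))"
  by (auto simp: uu_def U.sel)

definition valid where "valid t \<longleftrightarrow> (\<forall>s\<in>nodes t. step (pseq s) (prule s) (map pseq (psubs s)))"

lemma nodes_trans': "x \<in> nodes s \<Longrightarrow> s \<in> nodes t \<Longrightarrow> x \<in> nodes t"
  by (induction rule: nodes.induct) (auto intro: nodes.intros)
lemma nodes_trans: "s \<in> nodes t \<Longrightarrow> x \<in> nodes s \<Longrightarrow> x \<in> nodes t"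
  using nodes_trans' by blast

lemma child_nodes: "i < length (psubs t) \<Longrightarrow> psubs t ! i \<in> nodes t"
  by (meson nodes.intros nth_mem)

lemma valid_node: "valid t \<Longrightarrow> s \<in> nodes t \<Longrightarrow> valid s"
  unfolding valid_def using nodes_trans by blast

lemma valid_root: "valid t \<Longrightarrow> step (pseq t) (prule t) (map pseq (psubs t))"
  unfolding valid_def using nodes.intros(1) by blast

lemma infm_shift: assumes "\<exists>\<^sub>\<infinity>k. Q (m+k)" shows "\<exists>\<^sub>\<infinity>k::nat. Q k"
proof (rule INFM_nat_le[THEN iffD2], intro allI)
  fix m' from INFM_nat_le[THEN iffD1, OF assms] obtain n where "n \<ge> m'" "Q (m+n)" by blast
  then show "\<exists>n\<ge>m'. Q n" by (intro exI[of _ "m+n"]) auto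
qed
lemma infm_unshift: assumes "\<exists>\<^sub>\<infinity>k. Q k" shows "\<exists>\<^sub>\<infinity>k. Q (m+k::nat)"
proof (rule INFM_nat_le[THEN iffD2], intro allI)
  fix m' from INFM_nat_le[THEN iffD1, OF assms] obtain n where "n \<ge> m + m'" "Q n" by blast
  then show "\<exists>n\<ge>m'. Q (m+n)" by (intro exI[of _ "n-m"]) auto
qed

lemma walk_add: "walk t f (m + k) = walk (walk t f m) (\<lambda>i. f (m+i)) k"
  by (induction k) auto

lemma branch_shift: "is_branch t f \<Longrightarrow> is_branch (walk t f m) (\<lambda>i. f (m+i))"
  unfolding is_branch_def
proof (intro allI)
  fix k assume "\<forall>k. f k < length (psubs (walk t f k))"
  then have "f (m+k) < length (psubs (walk t f (m+k)))" by blast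
  then show "f (m+k) < length (psubs (walk (walk t f m) (\<lambda>i. f (m+i)) k))" by (simp only: walk_add)
qed

lemma walk_nodes: "(\<forall>k'<k. f k' < length (psubs (walk t f k'))) \<Longrightarrow> walk t f k \<in> nodes t"
  by (induction k) (auto intro: nodes.intros)

definition good where "good t \<longleftrightarrow> (\<forall>f. is_branch t f \<longrightarrow> (\<exists>\<^sub>\<infinity>k. rbox (walk t f k) (f k)))"

lemma good_child: assumes "good t" "i < length (psubs t)" shows "good (psubs t ! i)"
  unfolding good_def
proof (intro allI impI)
  fix f assume b: "is_branch (psubs t ! i) f"
  define g where "g = case_nat i f"
  have w: "walk t g (Suc k) = walk (psubs t ! i) f k" for k
    using walk_add[of t g 1 k] by (simp add: g_def)
  have "is_branch t g" unfolding is_branch_def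
  proof
    fix k show "g k < length (psubs (walk t g k))"
      using b assms(2) w unfolding is_branch_def g_def by (cases k) auto
  qed
  then have "\<exists>\<^sub>\<infinity>k. rbox (walk t g k) (g k)" using assms(1) good_def by blast
  then have "\<exists>\<^sub>\<infinity>k. rbox (walk t g (1+k)) (g (1+k))" by (rule infm_unshift)
  then show "\<exists>\<^sub>\<infinity>k. rbox (walk (psubs t ! i) f k) (f k)" using w by (simp add: g_def)
qed

lemma good_nodes': "s \<in> nodes t \<Longrightarrow> good t \<Longrightarrow> good s"
  by (induction rule: nodes.induct) (auto simp: in_set_conv_nth intro: good_child)

lemma Proofs_iff: "t \<in> Proofs \<longleftrightarrow> valid t \<and> good t"
  by (simp add: Proofs_def is_proof_def valid_def good_def)

lemma mbranch_down': "mbranch t n \<Longrightarrow> n = Suc k \<Longrightarrow> mbranch t k"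
proof (induction t n arbitrary: k rule: mbranch.induct)
  case (2 i t k')
  then show ?case by (cases k) (auto intro: mbranch.intros)
qed (auto intro: mbranch.intros)
lemma mbranch_down: "mbranch t (Suc k) \<Longrightarrow> mbranch t k" using mbranch_down' by blast


locale gen =
  fixes tr :: "sequent \<Rightarrow> sequent" and P :: "rl \<Rightarrow> bool" and j :: nat and inv :: "sequent \<Rightarrow> bool"
  assumes C0: "P r \<Longrightarrow> \<not> rb r j"
  and C1: "step S r ss \<Longrightarrow> inv S \<Longrightarrow> P r \<Longrightarrow> j < length ss \<and> ss ! j = tr S"
  and C2: "step S r ss \<Longrightarrow> inv S \<Longrightarrow> \<not> P r \<Longrightarrow>
     step (tr S) r (map (\<lambda>i. if rb r i then ss!i else tr (ss!i)) [0..<length ss])"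
  and C3: "step S r ss \<Longrightarrow> inv S \<Longrightarrow> \<not> P r \<Longrightarrow> i < length ss \<Longrightarrow> \<not> rb r i \<Longrightarrow> inv (ss!i)"
begin

abbreviation "u \<equiv> uu tr P j"
abbreviation "V \<equiv> U tr P j"

lemma seq_u: assumes "valid t" "inv (pseq t)" shows "pseq (u t) = tr (pseq t)"
proof (cases "P (prule t)")
  case True
  from C1[OF valid_root[OF assms(1)] assms(2) True] show ?thesis by (auto simp add: uu_def True)
qed (simp add: uu_def)

lemma notP: "valid t \<Longrightarrow> inv (pseq t) \<Longrightarrow> \<not> (P (prule t) \<and> j < length (psubs t)) \<Longrightarrow> \<not> P (prule t)"
  using C1[OF valid_root] by force

lemma inv_child: "valid t \<Longrightarrow> inv (pseq t) \<Longrightarrow> \<not> P (prule t) \<Longrightarrow> i < length (psubs t) \<Longrightarrow> \<not> rb (prule t) i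
   \<Longrightarrow> inv (pseq (psubs t ! i))"
  using C3[OF valid_root] by force

lemma valid_V: assumes "valid t" "inv (pseq t)" "\<not> P (prule t)"
  shows "step (pseq (V t)) (prule (V t)) (map pseq (psubs (V t)))"
proof -
  let ?ss = "map pseq (psubs t)"
  have "map pseq (psubs (V t)) = map (\<lambda>i. if rb (prule t) i then ?ss!i else tr (?ss!i)) [0..<length ?ss]"
  proof (rule nth_equalityI)
    fix i assume "i < length (map pseq (psubs (V t)))"
    then have i: "i < length (psubs t)" by simp
    show "map pseq (psubs (V t)) ! i = map (\<lambda>i. if rb (prule t) i then ?ss!i else tr (?ss!i)) [0..<length ?ss] ! i"
    proof (cases "rb (prule t) i")
      case False
      have "valid (psubs t ! i)" using assms(1) i child_nodes valid_node by blast
      moreover have "inv (pseq (psubs t ! i))" using inv_child assms i False by blast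
      ultimately show ?thesis using i False by (simp add: seq_u)
    qed (use i in simp)
  qed simp
  then show ?thesis using C2[OF valid_root[OF assms(1)] assms(2,3)] by simp
qed

lemma nodes_u: assumes "x \<in> nodes (u t)" "valid t" "inv (pseq t)"
  shows "x \<in> nodes t \<or> (\<exists>s\<in>nodes t. inv (pseq s) \<and> \<not> P (prule s) \<and> x = V s)"
  using assms(1)
proof (induction rule: nodes.induct)
  case 1
  then show ?case
  proof (cases "P (prule t) \<and> j < length (psubs t)")
    case True then show ?thesis by (simp add: uu_def child_nodes)
  next
    case False then show ?thesis using notP[OF assms(2,3)] nodes.intros(1)[of t] assms(3)
      by (auto simp: uu_def)
  qed
next
  case (2 s x')
  from 2(3) show ?case
  proof
    assume "s \<in> nodes t" then show ?thesis using 2(2) nodes.intros(2) by blast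
  next
    assume "\<exists>s'\<in>nodes t. inv (pseq s') \<and> \<not> P (prule s') \<and> s = V s'"
    then obtain s' where s': "s' \<in> nodes t" "inv (pseq s')" "\<not> P (prule s')" "s = V s'" by blast
    from 2(2) obtain i where i: "i < length (psubs s)" "x' = psubs s ! i" by (auto simp: in_set_conv_nth)
    have i': "i < length (psubs s')" using i s' by simp
    let ?c = "psubs s' ! i"
    have cn: "?c \<in> nodes t" using s'(1) i' child_nodes nodes_trans by blast
    show ?thesis
    proof (cases "rb (prule s') i")
      case True then show ?thesis using i i' s' cn by simp
    next
      case False
      have vs': "valid s'" using s'(1) assms(2) valid_node by blast
      have ic: "inv (pseq ?c)" using inv_child[OF vs' s'(2,3) i' False] .
      have vc: "valid ?c" using cn assms(2) valid_node by blast
      have x': "x' = u ?c" using i i' s' False by simp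
      show ?thesis
      proof (cases "P (prule ?c) \<and> j < length (psubs ?c)")
        case True
        then have "x' \<in> nodes t" using x' cn child_nodes nodes_trans by (simp add: uu_def)
        then show ?thesis by blast
      next
        case False
        then show ?thesis using x' cn ic notP[OF vc ic False] by (auto simp: uu_def)
      qed
    qed
  qed
qed

lemma valid_u: assumes "valid t" "inv (pseq t)" shows "valid (u t)"
  unfolding valid_def
proof
  fix x assume "x \<in> nodes (u t)"
  from nodes_u[OF this assms] show "step (pseq x) (prule x) (map pseq (psubs x))"
  proof
    assume "x \<in> nodes t" then show ?thesis using assms(1) valid_def by blast
  next
    assume "\<exists>s\<in>nodes t. inv (pseq s) \<and> \<not> P (prule s) \<and> x = V s"
    then obtain s where "s \<in> nodes t" "inv (pseq s)" "\<not> P (prule s)" "x = V s" by blast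
    then show ?thesis using valid_V valid_node assms(1) by blast
  qed
qed


lemma agree_SucD: "agree (Suc m) x y \<Longrightarrow> pseq x = pseq y \<and> prule x = prule y \<and>
   map pseq (psubs x) = map pseq (psubs y) \<and>
   (\<forall>i<length (psubs x). agree (if rbox x i then m else Suc m) (psubs x ! i) (psubs y ! i))"
  by (erule agree.cases) auto

lemma uu_nP: "\<not> (P (prule t) \<and> j < length (psubs t)) \<Longrightarrow> u t = V t"
  unfolding uu_def by (rule if_not_P)
lemma uu_P: "P (prule t) \<and> j < length (psubs t) \<Longrightarrow> u t = psubs t ! j"
  unfolding uu_def by (rule if_P)

lemma len_eq: "map pseq xs = map pseq ys \<Longrightarrow> length xs = length ys"
  using map_eq_imp_length_eq by blast

lemma pseq_u_agree: assumes "agree (Suc m) c c'" shows "pseq (u c) = pseq (u c')"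
proof -
  note a = agree_SucD[OF assms]
  have l: "length (psubs c) = length (psubs c')" using a len_eq by blast
  show ?thesis
  proof (cases "P (prule c) \<and> j < length (psubs c)")
    case True
    then have "pseq (psubs c ! j) = pseq (psubs c' ! j)" using a l by (metis nth_map)
    then show ?thesis using True a l by (simp add: uu_def)
  next
    case False
    then have F': "\<not> (P (prule c') \<and> j < length (psubs c'))" using a l by auto
    show ?thesis using uu_nP[OF False] uu_nP[OF F'] a by simp
  qed
qed

lemma agree_u: assumes "agree n s s'" shows "agree n (u s) (u s')"
  using assms
proof (coinduction arbitrary: n s s' rule: agree.coinduct)
  case (agree n s s')
  show ?case
  proof (cases n)
    case 0 then show ?thesis by simp
  next
    case (Suc m)
    note a = agree_SucD[OF agree[unfolded Suc]]
    have l: "length (psubs s) = length (psubs s')" using a len_eq by blast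
    show ?thesis
    proof (cases "P (prule s) \<and> j < length (psubs s)")
      case True
      then have nr: "\<not> rbox s j" using C0 rbox_rb by blast
      have ac: "agree (Suc m) (psubs s ! j) (psubs s' ! j)" using a True nr by auto
      have us: "u s = psubs s ! j" "u s' = psubs s' ! j" using True a l by (auto simp: uu_def)
      show ?thesis using agree_SucD[OF ac] Suc us by auto
    next
      case False
      have us: "u s = V s" "u s' = V s'" using False a l by (auto simp: uu_def)
      have m: "map pseq (psubs (V s)) = map pseq (psubs (V s'))"
      proof (rule nth_equalityI)
        fix i assume "i < length (map pseq (psubs (V s)))"
        then have i: "i < length (psubs s)" by simp
        show "map pseq (psubs (V s)) ! i = map pseq (psubs (V s')) ! i"
        proof (cases "rb (prule s) i")
          case True then show ?thesis using i l a by (metis U_simps nth_map)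
        next
          case False
          then have "agree (Suc m) (psubs s ! i) (psubs s' ! i)" using a i by (auto simp: rbox_rb)
          then show ?thesis using i l a False pseq_u_agree by simp
        qed
      qed (simp add: l)
      have ch: "\<forall>i<length (psubs (V s)).
          (\<exists>n c c'. (if rbox (V s) i then m else Suc m) = n \<and> psubs (V s) ! i = u c \<and> psubs (V s') ! i = u c' \<and> agree n c c') \<or>
          agree (if rbox (V s) i then m else Suc m) (psubs (V s) ! i) (psubs (V s') ! i)"
      proof (intro allI impI)
        fix i assume "i < length (psubs (V s))"
        then have i: "i < length (psubs s)" by simp
        show "(\<exists>n c c'. (if rbox (V s) i then m else Suc m) = n \<and> psubs (V s) ! i = u c \<and> psubs (V s') ! i = u c' \<and> agree n c c') \<or>
          agree (if rbox (V s) i then m else Suc m) (psubs (V s) ! i) (psubs (V s') ! i)"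
        proof (cases "rb (prule s) i")
          case True then show ?thesis using i l a by (auto simp: rbox_rb)
        next
          case False
          then have "agree (Suc m) (psubs s ! i) (psubs s' ! i)" using a i by (auto simp: rbox_rb)
          then show ?thesis using i l a False by (auto simp: rbox_rb)
        qed
      qed
      show ?thesis using us m ch a Suc by auto
    qed
  qed
qed

lemma good_u: assumes "valid t" "good t" "inv (pseq t)" shows "good (u t)"
  unfolding good_def
proof (intro allI impI)
  fix f assume b: "is_branch (u t) f"
  define stays where "stays k \<longleftrightarrow> \<not> (P (prule (walk t f k)) \<and> j < length (psubs (walk t f k))) \<and>
      \<not> rb (prule (walk t f k)) (f k)" for k
  have wu: "(\<forall>k'<k. stays k') \<Longrightarrow> walk (u t) f k = u (walk t f k) \<and> (\<forall>k'<k. f k' < length (psubs (walk t f k')))" for k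
  proof (induction k)
    case (Suc k)
    then have IH: "walk (u t) f k = u (walk t f k)" "\<forall>k'<k. f k' < length (psubs (walk t f k'))" by auto
    have st: "stays k" using Suc by auto
    let ?w = "walk t f k"
    have uw: "u ?w = V ?w" using st unfolding stays_def by (intro uu_nP) blast
    have fk: "f k < length (psubs ?w)" using b IH uw unfolding is_branch_def by (metis U_simps(3))
    have "walk (u t) f (Suc k) = psubs (V ?w) ! f k" using IH uw by simp
    also have "\<dots> = u (walk t f (Suc k))" using fk st by (simp add: stays_def)
    finally show ?case using IH fk less_Suc_eq by auto
  qed simp
  have tail: "good (walk (u t) f M) \<Longrightarrow> \<exists>\<^sub>\<infinity>k. rbox (walk (u t) f k) (f k)" for M
  proof -
    assume g: "good (walk (u t) f M)"
    have "\<exists>\<^sub>\<infinity>i. rbox (walk (walk (u t) f M) (\<lambda>i. f (M+i)) i) (f (M+i))"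
      using g branch_shift[OF b] good_def by blast
    then have "\<exists>\<^sub>\<infinity>i. rbox (walk (u t) f (M+i)) (f (M+i))" by (simp only: walk_add)
    then show ?thesis by (rule infm_shift)
  qed
  show "\<exists>\<^sub>\<infinity>k. rbox (walk (u t) f k) (f k)"
  proof (cases "\<forall>k. stays k")
    case True
    then have bt: "is_branch t f" using b wu unfolding is_branch_def
      by (metis U_simps(3) stays_def uu_def)
    then have "\<exists>\<^sub>\<infinity>k. rbox (walk t f k) (f k)" using assms(2) good_def by blast
    moreover have "\<not> rbox (walk t f k) (f k)" for k using True by (simp add: stays_def rbox_rb)
    ultimately have False using INFM_EX by blast
    then show ?thesis ..
  next
    case False
    define K where "K = (LEAST k. \<not> stays k)"
    have nK: "\<not> stays K" using False K_def by (metis LeastI)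
    have bK: "\<forall>k'<K. stays k'" using K_def not_less_Least by blast
    from wu[OF bK] have wK: "walk (u t) f K = u (walk t f K)" and lens: "\<forall>k'<K. f k' < length (psubs (walk t f k'))"
      by auto
    let ?w = "walk t f K"
    have wn: "?w \<in> nodes t" using walk_nodes lens by blast
    show ?thesis
    proof (cases "P (prule ?w) \<and> j < length (psubs ?w)")
      case True
      then have "walk (u t) f K = psubs ?w ! j" using wK by (simp add: uu_def)
      then have "walk (u t) f K \<in> nodes t" using True wn child_nodes nodes_trans by metis
      then show ?thesis using tail good_nodes' assms(2) by blast
    next
      case False
      then have r: "rb (prule ?w) (f K)" using nK stays_def by blast
      have uw: "u ?w = V ?w" using False by (rule uu_nP)
      have fk: "f K < length (psubs ?w)" using b wK uw unfolding is_branch_def by (metis U_simps(3))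
      have "walk (u t) f (Suc K) = psubs ?w ! f K" using wK uw fk r by simp
      then have "walk (u t) f (Suc K) \<in> nodes t" using fk wn child_nodes nodes_trans by metis
      then show ?thesis using tail good_nodes' assms(2) by blast
    qed
  qed
qed


lemma frag_u: "frag n x s \<Longrightarrow> x = u t \<Longrightarrow> \<exists>s0. frag n t s0 \<and> prule s0 = prule s"
proof (induction arbitrary: t rule: frag.induct)
  case (1 n x)
  show ?case
  proof (cases "P (prule t) \<and> j < length (psubs t)")
    case True
    then have "x = psubs t ! j" "\<not> rbox t j" using 1 uu_P C0 rbox_rb by auto
    then show ?thesis using True frag.intros(1) frag.intros(2) by metis
  next
    case False then show ?thesis using 1 uu_nP frag.intros(1) by force
  qed
next
  case (2 i x n s)
  show ?case
  proof (cases "P (prule t) \<and> j < length (psubs t)")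
    case True
    then have "x = psubs t ! j" "\<not> rbox t j" using 2 uu_P C0 rbox_rb by auto
    moreover have "frag (Suc n) x s" using 2 frag.intros(2) by blast
    ultimately show ?thesis using True frag.intros(2) by metis
  next
    case False
    then have x: "x = V t" using 2 uu_nP by simp
    then have i: "i < length (psubs t)" "\<not> rb (prule t) i" using 2 by (auto simp: rbox_rb)
    then have "psubs x ! i = u (psubs t ! i)" using x by simp
    then obtain s0 where "frag (Suc n) (psubs t ! i) s0" "prule s0 = prule s" using 2 by blast
    then show ?thesis using i frag.intros(2) rbox_rb by metis
  qed
next
  case (3 i x n s)
  show ?case
  proof (cases "P (prule t) \<and> j < length (psubs t)")
    case True
    then have "x = psubs t ! j" "\<not> rbox t j" using 3 uu_P C0 rbox_rb by auto
    moreover have "frag (Suc n) x s" using 3 frag.intros(3) by blast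
    ultimately show ?thesis using True frag.intros(2) by metis
  next
    case False
    then have x: "x = V t" using 3 uu_nP by simp
    then have i: "i < length (psubs t)" "rb (prule t) i" using 3 by (auto simp: rbox_rb)
    then have "psubs x ! i = psubs t ! i" using x by simp
    then have "frag (Suc n) t s" using 3 i frag.intros(3) rbox_rb by metis
    then show ?thesis by blast
  qed
qed

lemma mbranch_u: "mbranch x k \<Longrightarrow> x = u t \<Longrightarrow> mbranch t k"
proof (induction arbitrary: t rule: mbranch.induct)
  case (1 t') then show ?case by (simp add: mbranch.intros(1))
next
  case (2 i x k)
  show ?case
  proof (cases "P (prule t) \<and> j < length (psubs t)")
    case True
    then have "x = psubs t ! j" "\<not> rbox t j" using 2 uu_P C0 rbox_rb by auto
    moreover have "mbranch x (Suc k)" using 2 mbranch.intros(2) by blast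
    ultimately have "mbranch t (Suc (Suc k))" using True mbranch.intros(2) by metis
    then show ?thesis by (rule mbranch_down)
  next
    case False
    then have x: "x = V t" using 2 uu_nP by simp
    then have i: "i < length (psubs t)" "\<not> rb (prule t) i" using 2 by (auto simp: rbox_rb)
    then have "psubs x ! i = u (psubs t ! i)" using x by simp
    then have "mbranch (psubs t ! i) k" using 2 by blast
    then show ?thesis using i mbranch.intros(2) rbox_rb by metis
  qed
next
  case (3 i x)
  show ?case
  proof (cases "P (prule t) \<and> j < length (psubs t)")
    case True
    then have "x = psubs t ! j" "\<not> rbox t j" using 3 uu_P C0 rbox_rb by auto
    moreover have "mbranch x (Suc 0)" using 3 mbranch.intros(3) by blast
    ultimately have "mbranch t (Suc (Suc 0))" using True mbranch.intros(2) by metis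
    then show ?thesis by (rule mbranch_down)
  next
    case False
    then have x: "x = V t" using 3 uu_nP by simp
    then have i: "i < length (psubs t)" "rb (prule t) i" using 3 by (auto simp: rbox_rb)
    then show ?thesis using mbranch.intros(3) rbox_rb by metis
  qed
qed

definition uf where "uf t = (if inv (pseq t) then u t else t)"

theorem adm: assumes R: "\<And>p c. (p, c) \<in> R \<Longrightarrow> inv p \<and> tr p = c" shows "strongly_admissible R"
  unfolding strongly_admissible_def
proof (intro exI[of _ uf] conjI)
  show P1: "\<forall>t\<in>Proofs. uf t \<in> Proofs"
    using valid_u good_u by (simp add: Proofs_iff uf_def)
  show "\<forall>n t t'. t \<in> Proofs \<longrightarrow> t' \<in> Proofs \<longrightarrow> agree n t t' \<longrightarrow> agree n (uf t) (uf t')"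
  proof (intro allI impI)
    fix n t t' assume "agree n t t'"
    show "agree n (uf t) (uf t')"
    proof (cases n)
      case 0 then show ?thesis by (simp add: agree.intros(1))
    next
      case (Suc m)
      then have "pseq t = pseq t'" using agree_SucD \<open>agree n t t'\<close> by blast
      then show ?thesis using agree_u \<open>agree n t t'\<close> by (simp add: uf_def)
    qed
  qed
  show "\<forall>n t. t \<in> Pn n \<longrightarrow> uf t \<in> Pn n"
  proof (intro allI impI)
    fix n t assume t: "t \<in> Pn n"
    then have tP: "t \<in> Proofs" by (simp add: Pn_def)
    show "uf t \<in> Pn n"
    proof (cases "inv (pseq t)")
      case True
      have "uf t \<in> Proofs" using P1 tP by blast
      moreover have "\<not> is_cut (prule s)" if "frag n (uf t) s" for s
      proof -
        have "frag n (u t) s" using that True by (simp add: uf_def)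
        then obtain s0 where "frag n t s0" "prule s0 = prule s" using frag_u by blast
        then show ?thesis using t by (auto simp: Pn_def)
      qed
      ultimately show ?thesis by (simp add: Pn_def)
    qed (use t in \<open>simp add: uf_def\<close>)
  qed
  show "\<forall>t\<in>Proofs. local_height (uf t) \<le> local_height t"
  proof
    fix t
    have "{enat k | k. mbranch (uf t) k} \<subseteq> {enat k | k. mbranch t k}"
      using mbranch_u by (auto simp: uf_def)
    then show "local_height (uf t) \<le> local_height t" unfolding local_height_def by (rule Sup_subset_mono)
  qed
  show "\<forall>(prem, concl)\<in>R. \<forall>t\<in>Proofs. pseq t = prem \<longrightarrow> pseq (uf t) = concl"
  proof (clarify)
    fix p c t assume "(p, c) \<in> R" "t \<in> Proofs" "pseq t = p"
    then show "pseq (uf t) = c" using R seq_u by (auto simp: uf_def Proofs_iff)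
  qed
qed
end



lemma mdiff: assumes "X \<in># M" shows "add_mset D M - {#X#} = add_mset D (M - {#X#})"
proof (cases "D = X")
  case True then show ?thesis using assms by simp
next
  case False then show ?thesis using diff_union_swap[of X D M] by auto
qed

lemma in_diff_neq: "a \<noteq> b \<Longrightarrow> a \<in># M - {#b#} \<longleftrightarrow> a \<in># M"
  by (simp add: in_diff_count)

lemma sub_diff: assumes "N \<subseteq># M" "x \<notin># N" shows "N \<subseteq># M - {#x#}"
  unfolding subseteq_mset_def
proof
  fix a show "count N a \<le> count (M - {#x#}) a"
  proof (cases "a = x")
    case True then show ?thesis using assms(2) by (simp add: not_in_iff)
  next
    case False then show ?thesis using assms(1) by (simp add: subseteq_mset_def)
  qed
qed

lemma sub_diff2: "N \<subseteq># M \<Longrightarrow> x \<notin># N \<Longrightarrow> N \<subseteq># add_mset y (M - {#x#})"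
proof -
  assume "N \<subseteq># M" "x \<notin># N"
  then have "N \<subseteq># M - {#x#}" by (rule sub_diff)
  moreover have "M - {#x#} \<subseteq># add_mset y (M - {#x#})" by (simp add: subseteq_mset_def)
  ultimately show ?thesis by (rule subset_mset.order_trans)
qed

lemma sub_add: "N \<subseteq># M \<Longrightarrow> N \<subseteq># add_mset y M"
  using subset_mset.order_trans[of N M "add_mset y M"] by (simp add: subseteq_mset_def)

lemma upt2: "[0..<2] = [0, 1]" by (simp add: upt_rec)



lemmas ms = in_diff_neq mdiff add_mset_commute upt2 rb_def

definition "tr1 A B = (\<lambda>(L,R). (add_mset B (L - {#Imp A B#}), R))"
definition "tr2 A B = (\<lambda>(L,R). (L - {#Imp A B#}, add_mset A R))"
definition "tr3 A B = (\<lambda>(L,R). (add_mset A L, add_mset B (R - {#Imp A B#})))"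
definition "tr4 = (\<lambda>(L,R). (L, R - {#Bot#}))"
definition "tr5 A = (\<lambda>(L,R). (L, add_mset A (R - {#Box A#})))"
definition "invL A B = (\<lambda>(L::fm multiset,R::fm multiset). Imp A B \<in># L)"
definition "invR A B = (\<lambda>(L::fm multiset,R::fm multiset). Imp A B \<in># R)"
definition "inv4 = (\<lambda>(L::fm multiset,R::fm multiset). Bot \<in># R)"
definition "inv5 A = (\<lambda>(L::fm multiset,R::fm multiset). Box A \<in># R)"

lemma gen1: "gen (tr1 A B) (\<lambda>r. r = RImpL A B) 0 (invL A B)"
proof
  fix S r ss
  show "step S r ss \<Longrightarrow> invL A B S \<Longrightarrow> r = RImpL A B \<Longrightarrow> 0 < length ss \<and> ss ! 0 = tr1 A B S"
    by (cases S) (auto simp: tr1_def invL_def)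
  show "step S r ss \<Longrightarrow> invL A B S \<Longrightarrow> r \<noteq> RImpL A B \<Longrightarrow>
     step (tr1 A B S) r (map (\<lambda>i. if rb r i then ss!i else tr1 A B (ss!i)) [0..<length ss])"
    apply (cases S; cases r)
    apply (simp_all add: upt2 rb_def tr1_def invL_def)
    apply (auto simp: ms intro!: sub_diff2)
    done
  fix i show "step S r ss \<Longrightarrow> invL A B S \<Longrightarrow> r \<noteq> RImpL A B \<Longrightarrow> i < length ss \<Longrightarrow> \<not> rb r i \<Longrightarrow> invL A B (ss!i)"
    apply (cases S; cases r)
    apply (simp_all add: upt2 rb_def invL_def)
    apply (auto simp: ms less_Suc_eq nth_Cons')
    done
qed (simp add: rb_def)

lemma gen2: "gen (tr2 A B) (\<lambda>r. r = RImpL A B) 1 (invL A B)"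
proof
  fix S r ss
  show "step S r ss \<Longrightarrow> invL A B S \<Longrightarrow> r = RImpL A B \<Longrightarrow> 1 < length ss \<and> ss ! 1 = tr2 A B S"
    by (cases S) (auto simp: tr2_def invL_def)
  show "step S r ss \<Longrightarrow> invL A B S \<Longrightarrow> r \<noteq> RImpL A B \<Longrightarrow>
     step (tr2 A B S) r (map (\<lambda>i. if rb r i then ss!i else tr2 A B (ss!i)) [0..<length ss])"
    apply (cases S; cases r)
    apply (simp_all add: upt2 rb_def tr2_def invL_def)
    apply (auto simp: ms intro!: sub_diff)
    done
  fix i show "step S r ss \<Longrightarrow> invL A B S \<Longrightarrow> r \<noteq> RImpL A B \<Longrightarrow> i < length ss \<Longrightarrow> \<not> rb r i \<Longrightarrow> invL A B (ss!i)"
    apply (cases S; cases r)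
    apply (simp_all add: upt2 rb_def invL_def)
    apply (auto simp: ms less_Suc_eq nth_Cons')
    done
qed (simp add: rb_def)

lemma gen3: "gen (tr3 A B) (\<lambda>r. r = RImpR A B) 0 (invR A B)"
proof
  fix S r ss
  show "step S r ss \<Longrightarrow> invR A B S \<Longrightarrow> r = RImpR A B \<Longrightarrow> 0 < length ss \<and> ss ! 0 = tr3 A B S"
    by (cases S) (auto simp: tr3_def invR_def)
  show "step S r ss \<Longrightarrow> invR A B S \<Longrightarrow> r \<noteq> RImpR A B \<Longrightarrow>
     step (tr3 A B S) r (map (\<lambda>i. if rb r i then ss!i else tr3 A B (ss!i)) [0..<length ss])"
    apply (cases S; cases r)
    apply (simp_all add: upt2 rb_def tr3_def invR_def)
    apply (auto simp: ms intro!: sub_add)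
    done
  fix i show "step S r ss \<Longrightarrow> invR A B S \<Longrightarrow> r \<noteq> RImpR A B \<Longrightarrow> i < length ss \<Longrightarrow> \<not> rb r i \<Longrightarrow> invR A B (ss!i)"
    apply (cases S; cases r)
    apply (simp_all add: upt2 rb_def invR_def)
    apply (auto simp: ms less_Suc_eq nth_Cons')
    done
qed (simp add: rb_def)

lemma gen4: "gen tr4 (\<lambda>r. False) 0 inv4"
proof
  fix S r ss
  show "step S r ss \<Longrightarrow> inv4 S \<Longrightarrow> \<not> False \<Longrightarrow>
     step (tr4 S) r (map (\<lambda>i. if rb r i then ss!i else tr4 (ss!i)) [0..<length ss])"
    apply (cases S; cases r)
    apply (simp_all add: upt2 rb_def tr4_def inv4_def)
    apply (auto simp: ms intro!: sub_diff2)
    done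
  fix i show "step S r ss \<Longrightarrow> inv4 S \<Longrightarrow> \<not> False \<Longrightarrow> i < length ss \<Longrightarrow> \<not> rb r i \<Longrightarrow> inv4 (ss!i)"
    apply (cases S; cases r)
    apply (simp_all add: upt2 rb_def inv4_def)
    apply (auto simp: ms less_Suc_eq nth_Cons')
    done
qed auto

lemma gen5: "gen (tr5 A) (\<lambda>r. \<exists>Pi. r = RBox Pi A) 0 (inv5 A)"
proof
  fix S r ss
  show "step S r ss \<Longrightarrow> inv5 A S \<Longrightarrow> \<exists>Pi. r = RBox Pi A \<Longrightarrow> 0 < length ss \<and> ss ! 0 = tr5 A S"
    by (cases S) (auto simp: tr5_def inv5_def)
  show "step S r ss \<Longrightarrow> inv5 A S \<Longrightarrow> \<not> (\<exists>Pi. r = RBox Pi A) \<Longrightarrow>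
     step (tr5 A S) r (map (\<lambda>i. if rb r i then ss!i else tr5 A (ss!i)) [0..<length ss])"
    apply (cases S; cases r)
    apply (simp_all add: upt2 rb_def tr5_def inv5_def)
    apply (auto simp: ms intro!: sub_diff2)
    done
  fix i show "step S r ss \<Longrightarrow> inv5 A S \<Longrightarrow> \<not> (\<exists>Pi. r = RBox Pi A) \<Longrightarrow> i < length ss \<Longrightarrow> \<not> rb r i \<Longrightarrow> inv5 A (ss!i)"
    apply (cases S; cases r)
    apply (simp_all add: upt2 rb_def inv5_def)
    apply (auto simp: ms less_Suc_eq nth_Cons')
    done
qed (auto simp add: rb_def)


theorem lemma5p2:
  fixes A B :: fm
  shows "strongly_admissible (li_imp A B) \<and> strongly_admissible (ri_imp A B) \<and>
         strongly_admissible (i_imp A B) \<and> strongly_admissible i_bot \<and>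
         strongly_admissible (li_box A)"
proof (intro conjI)
  show "strongly_admissible (li_imp A B)"
    by (rule gen.adm[OF gen1]) (auto simp: li_imp_def tr1_def invL_def)
  show "strongly_admissible (ri_imp A B)"
    by (rule gen.adm[OF gen2]) (auto simp: ri_imp_def tr2_def invL_def)
  show "strongly_admissible (i_imp A B)"
    by (rule gen.adm[OF gen3]) (auto simp: i_imp_def tr3_def invR_def)
  show "strongly_admissible i_bot"
    by (rule gen.adm[OF gen4]) (auto simp: i_bot_def tr4_def inv4_def)
  show "strongly_admissible (li_box A)"
    by (rule gen.adm[OF gen5]) (auto simp: li_box_def tr5_def inv5_def)
qed

end
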